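(* For every integer $i\ge 0$, the $i$th moment $\mathcal M(i)=\mathrm E[(I_K)^i]$ of $I_K=\sum_{k=1}^K\log_2(1+\gamma_k)$ equals $$\mathcal M(i)=\frac{i!}{1+\sum_{k=1}^K\frac{\lambda_k^2}{1-\lambda_k^2}}\sum_{\substack{i_1+\cdots+i_K=i\\ i_l\ge0}}\frac{1}{i_1!\cdots i_K!}\int_0^\infty e^{-t}\prod_{k=1}^K\left(\int_0^\infty e^{-y}\,\log_2^{i_k}(1+w_k y)\,{}_0F_1(;1;\varpi_k y t)\,dy\right)dt,$$ where $w_k=2g_k\sigma_k^2(1-\lambda_k^2)$ and $\varpi_k=\frac{\lambda_k^2}{1-\lambda_k^2}\left(1+\sum_{l=1}^K\frac{\lambda_l^2}{1-\lambda_l^2}\right)^{-1}$.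
   Context: Fix $K\ge 1$, $\sigma_1,\dots,\sigma_K>0$ and real $\lambda_1,\dots,\lambda_K$ with $|\lambda_k|<1$. Let ${}_0F_1(;1;z)=\sum_{n\ge0} z^n/(n!)^2$. The random vector $(|h_1|,\dots,|h_K|)$ of nonnegative channel amplitudes has joint PDF on $[0,\infty)^K$ $$f(x_1,\dots,x_K)=\prod_{k=1}^K\frac{1}{\sigma_k^2(1-\lambda_k^2)}\int_0^\infty e^{-\left(1+\sum_{k=1}^K\frac{\lambda_k^2}{1-\lambda_k^2}\right)t}\prod_{k=1}^K x_k\,e^{-\frac{x_k^2}{2\sigma_k^2(1-\lambda_k^2)}}\,{}_0F_1\!\left(;1;\frac{x_k^2\lambda_k^2 t}{2\sigma_k^2(1-\lambda_k^2)^2}\right)dt .$$ Fix constants $g_1,\dots,g_K>0$ (transmit SNRs) and set $\gamma_k=g_k|h_k|^2$. *)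

theory Defs
  imports "HOL-Analysis.Analysis" "HOL-Library.FuncSet"
begin

definition hyp0F1 :: "real \<Rightarrow> real" where
  "hyp0F1 z = (\<Sum>n. z ^ n / (fact n) ^ 2)"

text \<open>Channels are indexed by k in {..<K} (i.e. 0..K-1 instead of 1..K).
  The constant 1 + sum_k lambda_k^2/(1-lambda_k^2).\<close>
definition Sconst :: "nat \<Rightarrow> (nat \<Rightarrow> real) \<Rightarrow> real" where
  "Sconst K lam = 1 + (\<Sum>k<K. (lam k)\<^sup>2 / (1 - (lam k)\<^sup>2))"

text \<open>Joint PDF of (|h_1|,...,|h_K|) on [0,inf)^K.\<close>
definition jpdf :: "nat \<Rightarrow> (nat \<Rightarrow> real) \<Rightarrow> (nat \<Rightarrow> real) \<Rightarrow> (nat \<Rightarrow> real) \<Rightarrow> real" where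
  "jpdf K sig lam x =
     (\<Prod>k<K. 1 / ((sig k)\<^sup>2 * (1 - (lam k)\<^sup>2))) *
     (LBINT t:{0..}. exp (- Sconst K lam * t) *
        (\<Prod>k<K. x k * exp (- (x k)\<^sup>2 / (2 * (sig k)\<^sup>2 * (1 - (lam k)\<^sup>2)))
              * hyp0F1 ((x k)\<^sup>2 * (lam k)\<^sup>2 * t / (2 * (sig k)\<^sup>2 * (1 - (lam k)\<^sup>2)\<^sup>2))))"

definition sumrate :: "nat \<Rightarrow> (nat \<Rightarrow> real) \<Rightarrow> (nat \<Rightarrow> real) \<Rightarrow> real" where
  "sumrate K g x = (\<Sum>k<K. log 2 (1 + g k * (x k)\<^sup>2))"

definition moment :: "nat \<Rightarrow> (nat \<Rightarrow> real) \<Rightarrow> (nat \<Rightarrow> real) \<Rightarrow> (nat \<Rightarrow> real) \<Rightarrow> nat \<Rightarrow> real" where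
  "moment K sig lam g i =
     (LINT x:{x \<in> space (PiM {..<K} (\<lambda>_. lborel)). \<forall>k<K. 0 \<le> x k} | PiM {..<K} (\<lambda>_. lborel).
        (sumrate K g x) ^ i * jpdf K sig lam x)"

end

theory Submission
  imports Defs "HOL-Probability.Distributions"
begin

lemma pow_fact_le_exp: "0 \<le> (x::real) \<Longrightarrow> x ^ n / fact n \<le> exp x"
proof -
  assume x: "0 \<le> x"
  have s: "summable (\<lambda>n. x ^ n / fact n)" using summable_exp_generic[of x]
    by (simp add: divide_inverse ac_simps)
  have "(\<Sum>m\<in>{n}. x ^ m / fact m) \<le> (\<Sum>m. x ^ m / fact m)"
    by (rule sum_le_suminf[OF s]) (use x in auto)
  also have "\<dots> = exp x" by (simp add: exp_def divide_inverse ac_simps)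
  finally show ?thesis by simp
qed

lemma hyp0F1_summable: "summable (\<lambda>n. z ^ n / (fact n) ^ 2 :: real)"
proof (rule summable_comparison_test_ev)
  show "summable (\<lambda>n. \<bar>z\<bar> ^ n / fact n)" using summable_exp_generic[of "\<bar>z\<bar>"]
    by (simp add: divide_inverse ac_simps)
  show "\<forall>\<^sub>F n in sequentially. norm (z ^ n / (fact n)\<^sup>2) \<le> \<bar>z\<bar> ^ n / fact n"
  proof (intro always_eventually allI)
    fix n
    have f: "(1::real) \<le> fact n" by simp
    have "norm (z ^ n / (fact n)\<^sup>2) = \<bar>z\<bar> ^ n / (fact n * fact n)"
      by (simp add: power2_eq_square power_abs)
    also have "\<dots> \<le> \<bar>z\<bar> ^ n / fact n"
      using f by (intro divide_left_mono) (auto simp: mult_le_cancel_left1)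
    finally show "norm (z ^ n / (fact n)\<^sup>2) \<le> \<bar>z\<bar> ^ n / fact n" .
  qed
qed

lemma hyp0F1_nonneg: "0 \<le> z \<Longrightarrow> 0 \<le> hyp0F1 z"
  unfolding hyp0F1_def by (intro suminf_nonneg hyp0F1_summable) auto

lemma hyp0F1_bound:
  assumes p: "0 \<le> p" and q: "0 \<le> q"
  shows "hyp0F1 (p * q) \<le> exp p * exp q"
proof -
  have sp: "summable (\<lambda>n. p ^ n / fact n)" using summable_exp_generic[of p]
    by (simp add: divide_inverse ac_simps)
  have "hyp0F1 (p * q) = (\<Sum>n. (p*q) ^ n / (fact n)^2)" by (simp add: hyp0F1_def)
  also have "\<dots> \<le> (\<Sum>n. p ^ n / fact n * exp q)"
  proof (rule suminf_le)
    fix n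
    have "(p*q) ^ n / (fact n)^2 = (p ^ n / fact n) * (q ^ n / fact n)"
      by (simp add: power_mult_distrib power2_eq_square)
    also have "\<dots> \<le> (p ^ n / fact n) * exp q"
      using pow_fact_le_exp[OF q] p by (intro mult_left_mono) auto
    finally show "(p*q) ^ n / (fact n)^2 \<le> p ^ n / fact n * exp q" .
  qed (rule hyp0F1_summable, rule summable_mult2[OF sp])
  also have "\<dots> = (\<Sum>n. p ^ n / fact n) * exp q" by (rule suminf_mult2[OF sp, symmetric])
  also have "(\<Sum>n. p ^ n / fact n) = exp p" by (simp add: exp_def divide_inverse ac_simps)
  finally show ?thesis .
qed

lemma hyp0F1_measurable[measurable]: "hyp0F1 \<in> borel_measurable borel"
  unfolding hyp0F1_def[abs_def] by measurable

lemma nn_integral_exp_Ici: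
  assumes r: "0 < (r::real)"
  shows "(\<integral>\<^sup>+x. ennreal (exp (- r * x)) * indicator {0..} x \<partial>lborel) = ennreal (1 / r)"
proof -
  have eq: "\<And>x. indicator {0..} (x / r) = (indicator {0..} x :: ennreal)"
    using r by (simp add: field_simps split: split_indicator)
  have "(\<integral>\<^sup>+x. ennreal (exp (- r * x)) * indicator {0..} x \<partial>lborel)
     = ennreal (1/r) * (\<integral>\<^sup>+x. ennreal (exp (- r * (x / r))) * indicator {0..} (x/r) \<partial>lborel)"
    using r by (subst nn_integral_real_affine[where c="1 / r" and t=0]) auto
  also have "\<dots> = ennreal (1/r) * (\<integral>\<^sup>+x. ennreal (x^0 * exp (- x)) * indicator {0..} x \<partial>lborel)"
    using r by (simp add: eq)
  also have "\<dots> = ennreal (1/r)" by (subst nn_intergal_power_times_exp_Ici) simp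
  finally show ?thesis .
qed


lemma log2_nonneg: "0 \<le> (z::real) \<Longrightarrow> 0 \<le> log 2 (1 + z)"
proof -
  assume z: "0 \<le> z"
  then have "0 < 1 + z" "1 \<le> 1 + z" by simp_all
  then show ?thesis by (subst zero_le_log_cancel_iff) auto
qed

lemma log_pow_bound:
  assumes w: "0 \<le> w" and y: "0 \<le> y" and e: "0 < \<epsilon>"
  shows "(log 2 (1 + w*y)) ^ c \<le> (w / (\<epsilon> * ln 2)) ^ c * fact c * exp (\<epsilon> * y)"
proof -
  have L0: "0 \<le> log 2 (1 + w*y)" using w y by (intro log2_nonneg) simp
  have "log 2 (1 + w*y) = ln (1 + w*y) / ln 2" by (simp add: log_def)
  also have "\<dots> \<le> (w*y) / ln 2"
    using ln_add_one_self_le_self[of "w*y"] w y by (intro divide_right_mono) auto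
  finally have L1: "log 2 (1 + w*y) \<le> w*y / ln 2" .
  have "(log 2 (1 + w*y)) ^ c \<le> (w*y / ln 2) ^ c" by (rule power_mono[OF L1 L0])
  also have "\<dots> = (w / (\<epsilon> * ln 2)) ^ c * (\<epsilon> * y) ^ c"
  proof -
    have "w*y / ln 2 = (w / (\<epsilon> * ln 2)) * (\<epsilon> * y)" using e by (simp add: field_simps)
    then show ?thesis by (simp only: power_mult_distrib)
  qed
  also have "\<dots> \<le> (w / (\<epsilon> * ln 2)) ^ c * (fact c * exp (\<epsilon> * y))"
  proof (rule mult_left_mono)
    have "(\<epsilon> * y) ^ c / fact c \<le> exp (\<epsilon> * y)" using e y by (intro pow_fact_le_exp) simp
    then show "(\<epsilon> * y) ^ c \<le> fact c * exp (\<epsilon> * y)" by (simp add: field_simps)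
  qed (use w e in simp)
  finally show ?thesis by (simp add: mult.assoc)
qed

lemma Y_bound:
  assumes w: "0 \<le> w" and r: "0 \<le> r" and t: "0 \<le> t" and e: "0 < \<epsilon>" and h: "0 < \<eta>" and eh: "\<epsilon> + \<eta> < 1"
  shows "(\<integral>\<^sup>+y. ennreal (exp (- y) * (log 2 (1 + w*y)) ^ c * hyp0F1 (r*y*t)) * indicator {0..} y \<partial>lborel)
     \<le> ennreal ((w / (\<epsilon> * ln 2)) ^ c * fact c / (1 - \<epsilon> - \<eta>)) * ennreal (exp (r*t/\<eta>))"
proof -
  define C where "C = (w / (\<epsilon> * ln 2)) ^ c * fact c * exp (r*t/\<eta>)"
  have C0: "0 \<le> C" using w e by (simp add: C_def)
  have pw: "exp (- y) * (log 2 (1 + w*y)) ^ c * hyp0F1 (r*y*t) \<le> C * exp (- (1 - \<epsilon> - \<eta>) * y)"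
    if y: "0 \<le> y" for y
  proof -
    have F: "hyp0F1 (r*y*t) \<le> exp (\<eta>*y) * exp (r*t/\<eta>)"
    proof -
      have eqn: "r*y*t = (\<eta>*y) * (r*t/\<eta>)" using h by (simp add: field_simps)
      have "hyp0F1 ((\<eta>*y) * (r*t/\<eta>)) \<le> exp (\<eta>*y) * exp (r*t/\<eta>)"
        using h y r t by (intro hyp0F1_bound) auto
      then show ?thesis by (simp only: eqn)
    qed
    have L: "(log 2 (1 + w*y)) ^ c \<le> (w / (\<epsilon> * ln 2)) ^ c * fact c * exp (\<epsilon> * y)"
      by (rule log_pow_bound[OF w y e])
    have "exp (- y) * (log 2 (1 + w*y)) ^ c * hyp0F1 (r*y*t)
       \<le> exp (- y) * ((w / (\<epsilon> * ln 2)) ^ c * fact c * exp (\<epsilon> * y)) * (exp (\<eta>*y) * exp (r*t/\<eta>))"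
    proof (rule mult_mono)
      show "exp (- y) * (log 2 (1 + w*y)) ^ c \<le> exp (- y) * ((w / (\<epsilon> * ln 2)) ^ c * fact c * exp (\<epsilon> * y))"
        by (rule mult_left_mono[OF L]) simp
      show "hyp0F1 (r*y*t) \<le> exp (\<eta>*y) * exp (r*t/\<eta>)" by (rule F)
      have "0 \<le> (w / (\<epsilon> * ln 2)) ^ c" using w e by simp
      then show "0 \<le> exp (- y) * ((w / (\<epsilon> * ln 2)) ^ c * fact c * exp (\<epsilon> * y))" by simp
      show "0 \<le> hyp0F1 (r*y*t)" using r y t by (intro hyp0F1_nonneg) simp
    qed
    also have "\<dots> = C * (exp (- y) * exp (\<epsilon> * y) * exp (\<eta>*y))"
      unfolding C_def by (simp only: mult_ac)
    also have "exp (- y) * exp (\<epsilon> * y) * exp (\<eta>*y) = exp (- (1 - \<epsilon> - \<eta>) * y)"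
    proof -
      have "- (1 - \<epsilon> - \<eta>) * y = -y + \<epsilon> * y + \<eta>*y" by algebra
      then show ?thesis by (simp only: exp_add)
    qed
    finally show ?thesis .
  qed
  have "(\<integral>\<^sup>+y. ennreal (exp (- y) * (log 2 (1 + w*y)) ^ c * hyp0F1 (r*y*t)) * indicator {0..} y \<partial>lborel)
     \<le> (\<integral>\<^sup>+y. ennreal C * (ennreal (exp (- (1 - \<epsilon> - \<eta>) * y)) * indicator {0..} y) \<partial>lborel)"
  proof (rule nn_integral_mono)
    fix y
    show "ennreal (exp (- y) * (log 2 (1 + w*y)) ^ c * hyp0F1 (r*y*t)) * indicator {0..} y
        \<le> ennreal C * (ennreal (exp (- (1 - \<epsilon> - \<eta>) * y)) * indicator {0..} y)"
    proof (cases "0 \<le> y")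
      case True
      have "ennreal (exp (- y) * (log 2 (1 + w*y)) ^ c * hyp0F1 (r*y*t)) \<le> ennreal (C * exp (- (1 - \<epsilon> - \<eta>) * y))"
        by (rule ennreal_leI[OF pw[OF True]])
      also have "\<dots> = ennreal C * ennreal (exp (- (1 - \<epsilon> - \<eta>) * y))"
        by (rule ennreal_mult[OF C0]) simp
      finally show ?thesis using True by simp
    next
      case False then show ?thesis by simp
    qed
  qed
  also have "\<dots> = ennreal C * (\<integral>\<^sup>+y. ennreal (exp (- (1 - \<epsilon> - \<eta>) * y)) * indicator {0..} y \<partial>lborel)"
    by (rule nn_integral_cmult) measurable
  also have "\<dots> = ennreal C * ennreal (1 / (1 - \<epsilon> - \<eta>))"
    using eh by (subst nn_integral_exp_Ici) auto
  also have "\<dots> = ennreal (C * (1 / (1 - \<epsilon> - \<eta>)))"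
    using eh by (intro ennreal_mult[symmetric] C0) simp
  also have "C * (1 / (1 - \<epsilon> - \<eta>)) = ((w / (\<epsilon> * ln 2)) ^ c * fact c / (1 - \<epsilon> - \<eta>)) * exp (r*t/\<eta>)"
    by (simp add: C_def divide_inverse mult_ac)
  also have "ennreal \<dots> = ennreal ((w / (\<epsilon> * ln 2)) ^ c * fact c / (1 - \<epsilon> - \<eta>)) * ennreal (exp (r*t/\<eta>))"
    using eh w e by (intro ennreal_mult) auto
  finally show ?thesis .
qed


lemma ennreal_mult_ind: "ennreal (a * indicator A x) = ennreal a * indicator A x"
  by (auto simp: indicator_def)

lemma nn_int_Ici_SUP:
  fixes h :: "nat \<Rightarrow> real" and G :: "real \<Rightarrow> ennreal"
  assumes inc: "incseq h" and unb: "\<And>x. \<exists>n. x \<le> h n"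
    and G[measurable]: "G \<in> borel_measurable borel"
  shows "(SUP n. \<integral>\<^sup>+x. G x * indicator {0..h n} x \<partial>lborel)
       = (\<integral>\<^sup>+x. G x * indicator {0..} x \<partial>lborel)"
proof -
  have pw: "(SUP n. G x * indicator {0..h n} x) = G x * indicator {0..} x" for x
  proof (rule antisym)
    have "G x * indicator {0..h n} x \<le> G x * indicator {0..} x" for n
      by (intro mult_left_mono) (auto simp: indicator_def)
    then show "(SUP n. G x * indicator {0..h n} x) \<le> G x * indicator {0..} x"
      by (rule SUP_least)
    obtain n where "x \<le> h n" using unb by blast
    then have "G x * indicator {0..} x = G x * indicator {0..h n} x"
      unfolding indicator_def by auto
    also have "\<dots> \<le> (SUP n. G x * indicator {0..h n} x)"
      by (rule SUP_upper) simp
    finally show "G x * indicator {0..} x \<le> (SUP n. G x * indicator {0..h n} x)" .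
  qed
  have "(\<integral>\<^sup>+x. G x * indicator {0..} x \<partial>lborel)
      = (\<integral>\<^sup>+x. (SUP n. G x * indicator {0..h n} x) \<partial>lborel)"
    by (simp only: pw)
  also have "\<dots> = (SUP n. \<integral>\<^sup>+x. G x * indicator {0..h n} x \<partial>lborel)"
  proof (rule nn_integral_monotone_convergence_SUP)
    show "incseq (\<lambda>n x. G x * indicator {0..h n} x)"
    proof (intro incseq_SucI le_funI)
      fix n x
      have "h n \<le> h (Suc n)" using inc by (simp add: incseq_Suc_iff)
      then show "G x * indicator {0..h n} x \<le> G x * indicator {0..h (Suc n)} x"
        by (intro mult_left_mono) (auto simp: indicator_def)
    qed
  qed simp
  finally show ?thesis by simp
qed

lemma nn_subst_square:
  fixes f :: "real \<Rightarrow> real" and \<beta> :: real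
  assumes b: "0 < \<beta>" and f[measurable]: "f \<in> borel_measurable borel"
  shows "(\<integral>\<^sup>+y. ennreal (f y) * indicator {0..} y \<partial>lborel)
       = (\<integral>\<^sup>+x. ennreal (f (x\<^sup>2 / (2*\<beta>)) * (x / \<beta>)) * indicator {0..} x \<partial>lborel)"
proof -
  let ?g = "\<lambda>x::real. x\<^sup>2 / (2*\<beta>)"
  have eq: "(\<integral>\<^sup>+y. ennreal (f y) * indicator {0..?g (real n)} y \<partial>lborel)
        = (\<integral>\<^sup>+x. ennreal (f (?g x) * (x / \<beta>)) * indicator {0..real n} x \<partial>lborel)" for n
  proof -
    have "(\<integral>\<^sup>+y. ennreal (f y * indicator {?g 0..?g (real n)} y) \<partial>lborel)
        = (\<integral>\<^sup>+x. ennreal (f (?g x) * (x / \<beta>) * indicator {0..real n} x) \<partial>lborel)"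
      using b by (intro nn_integral_substitution)
        (auto intro!: derivative_eq_intros continuous_intros simp: set_borel_measurable_def field_simps power2_eq_square)
    moreover have g0: "(0::real)\<^sup>2 / (2*\<beta>) = 0" by simp
    ultimately show ?thesis by (simp only: ennreal_mult_ind g0)
  qed
  have inc1: "incseq (\<lambda>n. ?g (real n))"
    using b by (intro incseq_SucI) (auto intro!: divide_right_mono power_mono)
  have unb1: "\<exists>n. x \<le> ?g (real n)" for x
  proof -
    obtain n :: nat where n: "max 1 (2*\<beta>*x) \<le> real n" using real_arch_simple by blast
    have n1: "real n \<le> (real n)\<^sup>2" using n by (simp add: power2_eq_square)
    have "2*\<beta>*x \<le> (real n)\<^sup>2" using n n1 by linarith
    then have "x \<le> ?g (real n)" using b by (simp add: field_simps)
    then show ?thesis by blast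
  qed
  have unb2: "\<exists>n. x \<le> real n" for x using real_arch_simple by blast
  have inc2: "incseq (\<lambda>n. real n)" by (simp add: incseq_def)
  have "(\<integral>\<^sup>+y. ennreal (f y) * indicator {0..} y \<partial>lborel)
      = (SUP n. \<integral>\<^sup>+y. ennreal (f y) * indicator {0..?g (real n)} y \<partial>lborel)"
    by (rule nn_int_Ici_SUP[OF inc1 unb1, symmetric]) measurable
  also have "\<dots> = (SUP n. \<integral>\<^sup>+x. ennreal (f (?g x) * (x / \<beta>)) * indicator {0..real n} x \<partial>lborel)"
    by (simp only: eq)
  also have "\<dots> = (\<integral>\<^sup>+x. ennreal (f (?g x) * (x / \<beta>)) * indicator {0..} x \<partial>lborel)"
    by (rule nn_int_Ici_SUP[OF inc2 unb2]) measurable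
  finally show ?thesis .
qed


lemma multinomial_real:
  fixes a :: "'k \<Rightarrow> real"
  assumes "finite A"
  shows "(\<Sum>k\<in>A. a k) ^ i = (\<Sum>c\<in>{c \<in> A \<rightarrow>\<^sub>E {..i}. (\<Sum>k\<in>A. c k) = i}.
            fact i / (\<Prod>k\<in>A. fact (c k)) * (\<Prod>k\<in>A. a k ^ c k))"
  using assms
proof (induction A arbitrary: i rule: finite_induct)
  case empty
  show ?case by (cases i) (auto simp: PiE_empty_domain)
next
  case (insert x F)
  let ?C = "\<lambda>A i. {c \<in> A \<rightarrow>\<^sub>E {..i}. (\<Sum>k\<in>A. c k) = i}"
  let ?t = "\<lambda>A i c. fact i / (\<Prod>k\<in>A. fact (c k)) * (\<Prod>k\<in>A. a k ^ c k)"
  have "(\<Sum>k\<in>insert x F. a k) ^ i = (a x + (\<Sum>k\<in>F. a k)) ^ i"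
    using insert by simp
  also have "\<dots> = (\<Sum>j\<le>i. of_nat (i choose j) * a x ^ j * (\<Sum>k\<in>F. a k) ^ (i - j))"
    by (rule binomial_ring)
  also have "\<dots> = (\<Sum>j\<le>i. \<Sum>c\<in>?C F (i - j). of_nat (i choose j) * a x ^ j * ?t F (i - j) c)"
    by (simp add: insert.IH sum_distrib_left)
  also have "\<dots> = (\<Sum>p\<in>Sigma {..i} (\<lambda>j. ?C F (i - j)). of_nat (i choose fst p) * a x ^ fst p * ?t F (i - fst p) (snd p))"
    by (subst sum.Sigma) (auto intro!: finite_PiE insert.hyps simp: split_beta)
  also have "\<dots> = (\<Sum>c\<in>?C (insert x F) i. ?t (insert x F) i c)"
  proof (rule sum.reindex_bij_witness[where i = "\<lambda>c. (c x, restrict c F)" and j = "\<lambda>p. (snd p)(x := fst p)"])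
    fix p assume p: "p \<in> Sigma {..i} (\<lambda>j. ?C F (i - j))"
    define j where "j = fst p"
    define c where "c = snd p"
    have pj: "p = (j, c)" by (simp add: j_def c_def)
    from p pj have j: "j \<le> i" and c: "c \<in> F \<rightarrow>\<^sub>E {..i - j}" and cs: "(\<Sum>k\<in>F. c k) = i - j" by auto
    have cx: "c x = undefined" using c insert.hyps by (auto simp: PiE_def extensional_def)
    show "(((snd p)(x := fst p)) x, restrict ((snd p)(x := fst p)) F) = p"
      using pj c insert.hyps by (auto simp: restrict_def fun_eq_iff PiE_def extensional_def)
    have sF: "(\<Sum>k\<in>F. (c(x := j)) k) = (\<Sum>k\<in>F. c k)"
      using insert.hyps by (intro sum.cong) auto
    have pF: "(\<Prod>k\<in>F. fact ((c(x := j)) k) :: real) = (\<Prod>k\<in>F. fact (c k))"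
      using insert.hyps by (intro prod.cong) auto
    have aF: "(\<Prod>k\<in>F. a k ^ (c(x := j)) k) = (\<Prod>k\<in>F. a k ^ c k)"
      using insert.hyps by (intro prod.cong) auto
    show "(snd p)(x := fst p) \<in> ?C (insert x F) i"
      using pj c j cs insert.hyps sF by (auto simp: PiE_def extensional_def Pi_def)
    have "of_nat (i choose j) * a x ^ j * ?t F (i - j) c = ?t (insert x F) i (c(x := j))"
      using insert.hyps j pF aF
      by (simp add: binomial_fact field_simps of_nat_diff)
    then show "?t (insert x F) i ((snd p)(x := fst p)) = of_nat (i choose fst p) * a x ^ fst p * ?t F (i - fst p) (snd p)"
      using pj by simp
  next
    fix c assume c: "c \<in> ?C (insert x F) i"
    have sum: "c x + (\<Sum>k\<in>F. c k) = i" using c insert.hyps by auto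
    show "(c x, restrict c F) \<in> Sigma {..i} (\<lambda>j. ?C F (i - j))"
    proof -
      have "(\<Sum>k\<in>F. restrict c F k) = (\<Sum>k\<in>F. c k)" by (intro sum.cong) auto
      moreover have "\<And>k. k \<in> F \<Longrightarrow> c k \<le> i - c x"
        using sum insert.hyps member_le_sum[of _ F c] by fastforce
      ultimately show ?thesis using sum by (auto simp: PiE_def Pi_def)
    qed
    show "(snd (c x, restrict c F))(x := fst (c x, restrict c F)) = c"
      using c by (auto simp: fun_eq_iff restrict_def PiE_def extensional_def)
  qed
  finally show ?case .
qed


definition Hf :: "(nat \<Rightarrow> real) \<Rightarrow> (nat \<Rightarrow> real) \<Rightarrow> nat \<Rightarrow> real \<Rightarrow> real \<Rightarrow> real" where
  "Hf sig lam k x t = x * exp (- x\<^sup>2 / (2 * (sig k)\<^sup>2 * (1 - (lam k)\<^sup>2)))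
      * hyp0F1 (x\<^sup>2 * (lam k)\<^sup>2 * t / (2 * (sig k)\<^sup>2 * (1 - (lam k)\<^sup>2)\<^sup>2))"

lemma Hf_measurable[measurable]: "(\<lambda>(x, t). Hf sig lam k x t) \<in> borel_measurable (borel \<Otimes>\<^sub>M borel)"
  unfolding Hf_def by measurable

lemma jpdf_Hf: "jpdf K sig lam x = (\<Prod>k<K. 1 / ((sig k)\<^sup>2 * (1 - (lam k)\<^sup>2))) *
     (LBINT t:{0..}. exp (- Sconst K lam * t) * (\<Prod>k<K. Hf sig lam k (x k) t))"
  by (simp add: jpdf_def Hf_def)

lemma Hf_nonneg: "0 \<le> x \<Longrightarrow> 0 \<le> t \<Longrightarrow> 0 \<le> Hf sig lam k x t"
  unfolding Hf_def by (intro mult_nonneg_nonneg hyp0F1_nonneg) auto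

lemma Sconst_ge1:
  assumes "\<And>k. k < K \<Longrightarrow> \<bar>lam k\<bar> < 1"
  shows "1 \<le> Sconst K lam"
proof -
  have "0 \<le> (\<Sum>k<K. (lam k)\<^sup>2 / (1 - (lam k)\<^sup>2))"
  proof (intro sum_nonneg divide_nonneg_nonneg)
    fix k assume "k \<in> {..<K}"
    then have "\<bar>lam k\<bar> < 1" using assms by auto
    then have "(lam k)\<^sup>2 < 1" by (simp add: abs_square_less_1)
    then show "0 \<le> 1 - (lam k)\<^sup>2" by simp
  qed simp
  then show ?thesis by (simp add: Sconst_def)
qed

lemma Hf_bound:
  assumes K: "1 \<le> K" and x: "0 \<le> x" and t: "0 \<le> t"
  shows "Hf sig lam k x t \<le> (x * exp (- x\<^sup>2 / (2 * (sig k)\<^sup>2 * (1 - (lam k)\<^sup>2)))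
      * exp (2 * real K * (x\<^sup>2 * (lam k)\<^sup>2 / (2 * (sig k)\<^sup>2 * (1 - (lam k)\<^sup>2)\<^sup>2)))) * exp (t / (2 * real K))"
proof -
  define z where "z = x\<^sup>2 * (lam k)\<^sup>2 / (2 * (sig k)\<^sup>2 * (1 - (lam k)\<^sup>2)\<^sup>2)"
  have z0: "0 \<le> z" unfolding z_def by simp
  have eq: "x\<^sup>2 * (lam k)\<^sup>2 * t / (2 * (sig k)\<^sup>2 * (1 - (lam k)\<^sup>2)\<^sup>2) = (2 * real K * z) * (t / (2 * real K))"
    using K by (simp add: z_def field_simps)
  have F: "hyp0F1 ((2 * real K * z) * (t / (2 * real K))) \<le> exp (2 * real K * z) * exp (t / (2 * real K))"
    using z0 t by (intro hyp0F1_bound) auto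
  have "Hf sig lam k x t = (x * exp (- x\<^sup>2 / (2 * (sig k)\<^sup>2 * (1 - (lam k)\<^sup>2)))) * hyp0F1 ((2 * real K * z) * (t / (2 * real K)))"
    unfolding Hf_def eq ..
  also have "\<dots> \<le> (x * exp (- x\<^sup>2 / (2 * (sig k)\<^sup>2 * (1 - (lam k)\<^sup>2)))) * (exp (2 * real K * z) * exp (t / (2 * real K)))"
    using x by (intro mult_left_mono F) simp
  finally show ?thesis by (simp add: z_def mult.assoc)
qed

lemma jpdf_nn:
  assumes K: "1 \<le> K" and lam: "\<And>k. k < K \<Longrightarrow> \<bar>lam k\<bar> < 1" and x: "\<And>k. k < K \<Longrightarrow> 0 \<le> x k"
  shows "ennreal (jpdf K sig lam x) = ennreal (\<Prod>k<K. 1 / ((sig k)\<^sup>2 * (1 - (lam k)\<^sup>2))) *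
     (\<integral>\<^sup>+t. ennreal (exp (- Sconst K lam * t) * (\<Prod>k<K. Hf sig lam k (x k) t)) * indicator {0..} t \<partial>lborel)"
proof -
  define S where "S = Sconst K lam"
  have S1: "1 \<le> S" using Sconst_ge1[OF lam] by (simp add: S_def)
  define P where "P = (\<Prod>k<K. 1 / ((sig k)\<^sup>2 * (1 - (lam k)\<^sup>2)))"
  have P0: "0 \<le> P" unfolding P_def
  proof (intro prod_nonneg)
    fix k assume "k \<in> {..<K}"
    then have "(lam k)\<^sup>2 < 1" using lam by (simp add: abs_square_less_1)
    then show "0 \<le> 1 / ((sig k)\<^sup>2 * (1 - (lam k)\<^sup>2))" by simp
  qed
  define f where "f t = exp (- S * t) * (\<Prod>k<K. Hf sig lam k (x k) t)" for t
  have fm[measurable]: "f \<in> borel_measurable borel"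
    unfolding f_def by measurable
  have f0: "0 \<le> t \<Longrightarrow> 0 \<le> f t" for t
    unfolding f_def using x by (auto intro!: mult_nonneg_nonneg prod_nonneg Hf_nonneg)
  define B where "B = (\<Prod>k<K. x k * exp (- (x k)\<^sup>2 / (2 * (sig k)\<^sup>2 * (1 - (lam k)\<^sup>2)))
      * exp (2 * real K * ((x k)\<^sup>2 * (lam k)\<^sup>2 / (2 * (sig k)\<^sup>2 * (1 - (lam k)\<^sup>2)\<^sup>2))))"
  have B0: "0 \<le> B" unfolding B_def using x by (auto intro!: prod_nonneg)
  have fb: "f t \<le> B * exp (- (S - 1/2) * t)" if t: "0 \<le> t" for t
  proof -
    have "(\<Prod>k<K. Hf sig lam k (x k) t) \<le> (\<Prod>k<K. (x k * exp (- (x k)\<^sup>2 / (2 * (sig k)\<^sup>2 * (1 - (lam k)\<^sup>2)))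
      * exp (2 * real K * ((x k)\<^sup>2 * (lam k)\<^sup>2 / (2 * (sig k)\<^sup>2 * (1 - (lam k)\<^sup>2)\<^sup>2)))) * exp (t / (2 * real K)))"
      using x t K by (intro prod_mono conjI Hf_nonneg Hf_bound) auto
    also have "\<dots> = B * exp (t / (2 * real K)) ^ K"
      by (simp add: B_def prod.distrib)
    also have "exp (t / (2 * real K)) ^ K = exp (t / 2)"
      using K by (simp add: exp_of_nat_mult[symmetric])
    finally have pb: "(\<Prod>k<K. Hf sig lam k (x k) t) \<le> B * exp (t / 2)" .
    have "f t \<le> exp (- S * t) * (B * exp (t / 2))"
      unfolding f_def by (rule mult_left_mono[OF pb]) simp
    also have "\<dots> = B * (exp (- S * t) * exp (t / 2))" by (simp only: mult_ac)
    also have "exp (- S * t) * exp (t / 2) = exp (- (S - 1/2) * t)"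
    proof -
      have "- (S - 1/2) * t = - S * t + t / 2" by (simp add: algebra_simps)
      then show ?thesis by (simp only: exp_add)
    qed
    finally show ?thesis .
  qed
  have fin: "(\<integral>\<^sup>+t. ennreal (f t) * indicator {0..} t \<partial>lborel) < \<infinity>"
  proof -
    have "(\<integral>\<^sup>+t. ennreal (f t) * indicator {0..} t \<partial>lborel)
        \<le> (\<integral>\<^sup>+t. ennreal B * (ennreal (exp (- (S - 1/2) * t)) * indicator {0..} t) \<partial>lborel)"
    proof (rule nn_integral_mono)
      fix t
      show "ennreal (f t) * indicator {0..} t \<le> ennreal B * (ennreal (exp (- (S - 1/2) * t)) * indicator {0..} t)"
      proof (cases "0 \<le> t")
        case True
        have "ennreal (f t) \<le> ennreal (B * exp (- (S - 1/2) * t))" by (rule ennreal_leI[OF fb[OF True]])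
        also have "\<dots> = ennreal B * ennreal (exp (- (S - 1/2) * t))"
          by (rule ennreal_mult[OF B0]) simp
        finally show ?thesis using True by simp
      qed simp
    qed
    also have "\<dots> = ennreal B * (\<integral>\<^sup>+t. ennreal (exp (- (S - 1/2) * t)) * indicator {0..} t \<partial>lborel)"
      by (rule nn_integral_cmult) measurable
    also have "\<dots> = ennreal B * ennreal (1 / (S - 1/2))"
      using S1 by (subst nn_integral_exp_Ici) auto
    also have "\<dots> < \<infinity>" by (simp add: ennreal_mult_less_top)
    finally show ?thesis .
  qed
  have "(LBINT t:{0..}. f t) = enn2real (\<integral>\<^sup>+t. ennreal (indicator {0..} t *\<^sub>R f t) \<partial>lborel)"
    unfolding set_lebesgue_integral_def
    by (rule integral_eq_nn_integral) (auto simp: indicator_def intro!: f0)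
  also have "(\<integral>\<^sup>+t. ennreal (indicator {0..} t *\<^sub>R f t) \<partial>lborel) = (\<integral>\<^sup>+t. ennreal (f t) * indicator {0..} t \<partial>lborel)"
    by (intro nn_integral_cong) (auto simp: indicator_def)
  finally have I: "(LBINT t:{0..}. f t) = enn2real (\<integral>\<^sup>+t. ennreal (f t) * indicator {0..} t \<partial>lborel)" .
  have "ennreal (jpdf K sig lam x) = ennreal (P * enn2real (\<integral>\<^sup>+t. ennreal (f t) * indicator {0..} t \<partial>lborel))"
  proof -
    have "jpdf K sig lam x = P * (LBINT t:{0..}. f t)"
      unfolding jpdf_Hf P_def f_def S_def ..
    then show ?thesis by (simp only: I)
  qed
  also have "\<dots> = ennreal P * (\<integral>\<^sup>+t. ennreal (f t) * indicator {0..} t \<partial>lborel)"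
    using fin P0 by (simp add: ennreal_mult ennreal_enn2real)
  finally show ?thesis by (simp add: P_def f_def S_def)
qed


lemma sub1:
  assumes s: "0 < (sg::real)" and l: "\<bar>lam k\<bar> < 1" and sgk: "sig k = sg" and g: "0 \<le> gg" and t: "0 \<le> t"
  shows "ennreal (1 / ((sig k)\<^sup>2 * (1 - (lam k)\<^sup>2))) *
      (\<integral>\<^sup>+x. ennreal ((log 2 (1 + gg * x\<^sup>2)) ^ c * Hf sig lam k x t) * indicator {0..} x \<partial>lborel)
    = (\<integral>\<^sup>+y. ennreal (exp (- y) * (log 2 (1 + 2 * gg * (sig k)\<^sup>2 * (1 - (lam k)\<^sup>2) * y)) ^ c
          * hyp0F1 ((lam k)\<^sup>2 / (1 - (lam k)\<^sup>2) * y * t)) * indicator {0..} y \<partial>lborel)"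
proof -
  define a where "a = (sig k)\<^sup>2 * (1 - (lam k)\<^sup>2)"
  have l2: "(lam k)\<^sup>2 < 1" using l by (simp add: abs_square_less_1)
  have a0: "0 < a" unfolding a_def using l2 s sgk by simp
  define f where "f y = exp (- y) * (log 2 (1 + 2 * gg * (sig k)\<^sup>2 * (1 - (lam k)\<^sup>2) * y)) ^ c
          * hyp0F1 ((lam k)\<^sup>2 / (1 - (lam k)\<^sup>2) * y * t)" for y
  have fm[measurable]: "f \<in> borel_measurable borel" unfolding f_def by measurable
  have e1: "- x\<^sup>2 / (2 * (sig k)\<^sup>2 * (1 - (lam k)\<^sup>2)) = - (x\<^sup>2 / (2 * a))" for x
    by (simp add: a_def mult.assoc)
  have e2: "2 * gg * (sig k)\<^sup>2 * (1 - (lam k)\<^sup>2) * (x\<^sup>2 / (2 * a)) = gg * x\<^sup>2" for x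
  proof -
    have h: "2 * gg * (sig k)\<^sup>2 * (1 - (lam k)\<^sup>2) = 2 * gg * a" by (simp add: a_def mult.assoc)
    have "2 * gg * a * (x\<^sup>2 / (2 * a)) = gg * x\<^sup>2" using a0 by (simp add: field_simps)
    then show ?thesis by (simp only: h)
  qed
  have e3: "(lam k)\<^sup>2 / (1 - (lam k)\<^sup>2) * (x\<^sup>2 / (2 * a)) * t
      = x\<^sup>2 * (lam k)\<^sup>2 * t / (2 * (sig k)\<^sup>2 * (1 - (lam k)\<^sup>2)\<^sup>2)" for x
    using a0 l2 by (simp add: a_def field_simps power2_eq_square)
  have pw: "1 / a * ((log 2 (1 + gg * x\<^sup>2)) ^ c * Hf sig lam k x t) = f (x\<^sup>2 / (2 * a)) * (x / a)" for x
    unfolding f_def Hf_def e1 e2 e3 by (simp add: field_simps)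
  have "(\<integral>\<^sup>+y. ennreal (f y) * indicator {0..} y \<partial>lborel)
      = (\<integral>\<^sup>+x. ennreal (f (x\<^sup>2 / (2*a)) * (x / a)) * indicator {0..} x \<partial>lborel)"
    by (rule nn_subst_square[OF a0 fm])
  also have "\<dots> = (\<integral>\<^sup>+x. ennreal (1 / a) * (ennreal ((log 2 (1 + gg * x\<^sup>2)) ^ c * Hf sig lam k x t) * indicator {0..} x) \<partial>lborel)"
  proof (intro nn_integral_cong)
    fix x :: real
    show "ennreal (f (x\<^sup>2 / (2*a)) * (x / a)) * indicator {0..} x
        = ennreal (1 / a) * (ennreal ((log 2 (1 + gg * x\<^sup>2)) ^ c * Hf sig lam k x t) * indicator {0..} x)"
    proof (cases "0 \<le> x")
      case True
      have "0 \<le> (log 2 (1 + gg * x\<^sup>2)) ^ c * Hf sig lam k x t"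
        using True g t log2_nonneg[of "gg * x\<^sup>2"] by (intro mult_nonneg_nonneg Hf_nonneg zero_le_power) auto
      then have eq: "ennreal (1 / a) * ennreal ((log 2 (1 + gg * x\<^sup>2)) ^ c * Hf sig lam k x t)
          = ennreal (1 / a * ((log 2 (1 + gg * x\<^sup>2)) ^ c * Hf sig lam k x t))"
        using a0 by (intro ennreal_mult[symmetric]) auto
      have i1: "indicator {0..} x = (1::ennreal)" using True by simp
      show ?thesis unfolding i1 pw[symmetric] by (simp only: mult_1_right eq)
    qed simp
  qed
  also have "\<dots> = ennreal (1 / a) * (\<integral>\<^sup>+x. ennreal ((log 2 (1 + gg * x\<^sup>2)) ^ c * Hf sig lam k x t) * indicator {0..} x \<partial>lborel)"
    by (rule nn_integral_cmult) measurable
  finally show ?thesis by (simp add: a_def f_def)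
qed


definition Zf :: "nat \<Rightarrow> (nat \<Rightarrow> real) \<Rightarrow> (nat \<Rightarrow> real) \<Rightarrow> (nat \<Rightarrow> real) \<Rightarrow> (nat \<Rightarrow> nat) \<Rightarrow> nat \<Rightarrow> real \<Rightarrow> ennreal" where
  "Zf K sig lam g c k s = (\<integral>\<^sup>+y. ennreal (exp (- y)
              * (log 2 (1 + 2 * g k * (sig k)\<^sup>2 * (1 - (lam k)\<^sup>2) * y)) ^ (c k)
              * hyp0F1 ((lam k)\<^sup>2 / (1 - (lam k)\<^sup>2) / Sconst K lam * y * s)) * indicator {0..} y \<partial>lborel)"

definition Jf :: "nat \<Rightarrow> (nat \<Rightarrow> real) \<Rightarrow> (nat \<Rightarrow> real) \<Rightarrow> (nat \<Rightarrow> real) \<Rightarrow> (nat \<Rightarrow> nat) \<Rightarrow> ennreal" where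
  "Jf K sig lam g c = (\<integral>\<^sup>+s. ennreal (exp (- s)) * (\<Prod>k<K. Zf K sig lam g c k s) * indicator {0..} s \<partial>lborel)"

lemma Zf_measurable[measurable]: "Zf K sig lam g c k \<in> borel_measurable borel"
  unfolding Zf_def[abs_def] by measurable

lemma enn2real_prod: "enn2real (\<Prod>i\<in>A. f i) = (\<Prod>i\<in>A. enn2real (f i))"
  by (induction A rule: infinite_finite_induct) (auto simp: enn2real_mult)

lemma lam_facts:
  assumes "\<bar>l\<bar> < (1::real)"
  shows "l\<^sup>2 < 1" "0 < 1 - l\<^sup>2" "0 \<le> l\<^sup>2 / (1 - l\<^sup>2)"
proof -
  show l2: "l\<^sup>2 < 1" using assms by (simp add: abs_square_less_1)
  then show "0 < 1 - l\<^sup>2" by simp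
  then show "0 \<le> l\<^sup>2 / (1 - l\<^sup>2)" by simp
qed

lemma Zf_bound:
  assumes sig: "\<And>k. k < K \<Longrightarrow> sig k > 0" and lam: "\<And>k. k < K \<Longrightarrow> \<bar>lam k\<bar> < 1"
    and g: "\<And>k. k < K \<Longrightarrow> g k > 0" and k: "k < K" and s: "0 \<le> s"
  shows "Zf K sig lam g c k s \<le> ennreal ((2 * g k * (sig k)\<^sup>2 * (1 - (lam k)\<^sup>2) / (1 / (4 * Sconst K lam) * ln 2)) ^ c k * fact (c k)
       / (1 - 1 / (4 * Sconst K lam) - (Sconst K lam - 1/2) / Sconst K lam))
       * ennreal (exp ((lam k)\<^sup>2 / (1 - (lam k)\<^sup>2) / Sconst K lam * s / ((Sconst K lam - 1/2) / Sconst K lam)))"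
proof -
  have S1: "1 \<le> Sconst K lam" by (rule Sconst_ge1[OF lam])
  note lf = lam_facts[OF lam[OF k]]
  show ?thesis unfolding Zf_def
  proof (rule Y_bound)
    show "0 \<le> 2 * g k * (sig k)\<^sup>2 * (1 - (lam k)\<^sup>2)" using g[OF k] lf by simp
    show "0 \<le> (lam k)\<^sup>2 / (1 - (lam k)\<^sup>2) / Sconst K lam" using lf S1 by simp
    show "0 < 1 / (4 * Sconst K lam)" using S1 by simp
    show "0 < (Sconst K lam - 1/2) / Sconst K lam" using S1 by simp
    show "1 / (4 * Sconst K lam) + (Sconst K lam - 1/2) / Sconst K lam < 1" using S1 by (simp add: field_simps)
  qed (rule s)
qed

lemma sum_r:
  "(\<Sum>k<K. (lam k)\<^sup>2 / (1 - (lam k)\<^sup>2)) = Sconst K lam - 1"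
  by (simp add: Sconst_def)

lemma Zf_fin:
  assumes sig: "\<And>k. k < K \<Longrightarrow> sig k > 0" and lam: "\<And>k. k < K \<Longrightarrow> \<bar>lam k\<bar> < 1"
    and g: "\<And>k. k < K \<Longrightarrow> g k > 0" and k: "k < K" and s: "0 \<le> s"
  shows "Zf K sig lam g c k s < \<infinity>"
  by (rule le_less_trans[OF Zf_bound]) (use assms in \<open>auto simp: ennreal_mult_less_top\<close>)

lemma Jf_fin:
  assumes sig: "\<And>k. k < K \<Longrightarrow> sig k > 0" and lam: "\<And>k. k < K \<Longrightarrow> \<bar>lam k\<bar> < 1"
    and g: "\<And>k. k < K \<Longrightarrow> g k > 0"
  shows "Jf K sig lam g c < \<infinity>"
proof -
  define S where "S = Sconst K lam"
  have S1: "1 \<le> S" using Sconst_ge1[OF lam] by (simp add: S_def)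
  define \<eta> where "\<eta> = (S - 1/2) / S"
  have eta: "0 < \<eta>" using S1 by (simp add: \<eta>_def)
  define M where "M k = (2 * g k * (sig k)\<^sup>2 * (1 - (lam k)\<^sup>2) / (1 / (4 * S) * ln 2)) ^ c k * fact (c k)
       / (1 - 1 / (4 * S) - (S - 1/2) / S)" for k
  have M0: "0 \<le> M k" if k: "k < K" for k
  proof -
    note lf = lam_facts[OF lam[OF k]]
    have "1 / (4 * S) + (S - 1/2) / S < 1" using S1 by (simp add: field_simps)
    then show ?thesis unfolding M_def using g[OF k] lf S1 by (auto intro!: divide_nonneg_nonneg)
  qed
  define r where "r k = (lam k)\<^sup>2 / (1 - (lam k)\<^sup>2) / S" for k
  have Zb: "Zf K sig lam g c k s \<le> ennreal (M k) * ennreal (exp (r k * s / \<eta>))" if "k < K" "0 \<le> s" for k s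
    using Zf_bound[where K=K and sig=sig and lam=lam and g=g and k=k and s=s and c=c] sig lam g that by (simp add: M_def r_def \<eta>_def S_def)
  define \<kappa> where "\<kappa> = (1/2) / (S - 1/2)"
  have kappa: "0 < \<kappa>" using S1 by (simp add: \<kappa>_def)
  have sumr: "(\<Sum>k<K. r k * s / \<eta>) = s * (1 - \<kappa>)" for s
  proof -
    have "(\<Sum>k<K. r k * s / \<eta>) = (\<Sum>k<K. (lam k)\<^sup>2 / (1 - (lam k)\<^sup>2)) * (s / (S * \<eta>))"
      unfolding sum_distrib_right r_def by (intro sum.cong refl) (simp add: field_simps)
    also have "\<dots> = (S - 1) * (s / (S - 1/2))"
      using S1 by (simp add: sum_r S_def \<eta>_def)
    also have "\<dots> = s * (1 - \<kappa>)" using S1 by (simp add: \<kappa>_def field_simps)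
    finally show ?thesis .
  qed
  have "Jf K sig lam g c \<le> (\<integral>\<^sup>+s. ennreal (\<Prod>k<K. M k) * (ennreal (exp (- \<kappa> * s)) * indicator {0..} s) \<partial>lborel)"
    unfolding Jf_def
  proof (rule nn_integral_mono)
    fix s :: real
    show "ennreal (exp (- s)) * (\<Prod>k<K. Zf K sig lam g c k s) * indicator {0..} s
        \<le> ennreal (\<Prod>k<K. M k) * (ennreal (exp (- \<kappa> * s)) * indicator {0..} s)"
    proof (cases "0 \<le> s")
      case True
      have "(\<Prod>k<K. Zf K sig lam g c k s) \<le> (\<Prod>k<K. ennreal (M k) * ennreal (exp (r k * s / \<eta>)))"
        by (intro prod_mono_ennreal Zb True) auto
      also have "\<dots> = (\<Prod>k<K. ennreal (M k * exp (r k * s / \<eta>)))"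
        using M0 by (intro prod.cong refl ennreal_mult[symmetric]) auto
      also have "\<dots> = ennreal (\<Prod>k<K. M k * exp (r k * s / \<eta>))"
        using M0 by (intro prod_ennreal) auto
      also have "(\<Prod>k<K. M k * exp (r k * s / \<eta>)) = (\<Prod>k<K. M k) * exp (s * (1 - \<kappa>))"
        by (simp add: prod.distrib exp_sum[symmetric] sumr)
      finally have pb: "(\<Prod>k<K. Zf K sig lam g c k s) \<le> ennreal ((\<Prod>k<K. M k) * exp (s * (1 - \<kappa>)))" .
      have "ennreal (exp (- s)) * (\<Prod>k<K. Zf K sig lam g c k s)
          \<le> ennreal (exp (- s)) * ennreal ((\<Prod>k<K. M k) * exp (s * (1 - \<kappa>)))"
        by (rule mult_left_mono[OF pb]) simp
      also have "\<dots> = ennreal (exp (- s) * ((\<Prod>k<K. M k) * exp (s * (1 - \<kappa>))))"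
        using M0 by (intro ennreal_mult[symmetric] mult_nonneg_nonneg prod_nonneg) auto
      also have "exp (- s) * ((\<Prod>k<K. M k) * exp (s * (1 - \<kappa>))) = (\<Prod>k<K. M k) * exp (- \<kappa> * s)"
      proof -
        have "- \<kappa> * s = - s + s * (1 - \<kappa>)" by (simp add: algebra_simps)
        then have "exp (- \<kappa> * s) = exp (- s) * exp (s * (1 - \<kappa>))" by (simp only: exp_add)
        then show ?thesis by (simp only: mult_ac)
      qed
      also have "ennreal \<dots> = ennreal (\<Prod>k<K. M k) * ennreal (exp (- \<kappa> * s))"
        using M0 by (intro ennreal_mult prod_nonneg) auto
      finally show ?thesis using True by (simp add: mult.assoc)
    qed simp
  qed
  also have "\<dots> = ennreal (\<Prod>k<K. M k) * (\<integral>\<^sup>+s. ennreal (exp (- \<kappa> * s)) * indicator {0..} s \<partial>lborel)"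
    by (rule nn_integral_cmult) measurable
  also have "\<dots> = ennreal (\<Prod>k<K. M k) * ennreal (1 / \<kappa>)"
    using kappa by (subst nn_integral_exp_Ici) auto
  also have "\<dots> < \<infinity>" by (simp add: ennreal_mult_less_top)
  finally show ?thesis .
qed


lemma rhs_term:
  assumes sig: "\<And>k. k < K \<Longrightarrow> sig k > 0" and lam: "\<And>k. k < K \<Longrightarrow> \<bar>lam k\<bar> < 1"
    and g: "\<And>k. k < K \<Longrightarrow> g k > 0"
  shows "(LBINT t:{0..}. exp (- t) *
          (\<Prod>k<K. LBINT y:{0..}. exp (- y)
              * (log 2 (1 + 2 * g k * (sig k)\<^sup>2 * (1 - (lam k)\<^sup>2) * y)) ^ (c k)
              * hyp0F1 ((lam k)\<^sup>2 / (1 - (lam k)\<^sup>2) / Sconst K lam * y * t))) = enn2real (Jf K sig lam g c)"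
proof -
  have S1: "1 \<le> Sconst K lam" by (rule Sconst_ge1[OF lam])
  define h where "h k t y = exp (- y)
              * (log 2 (1 + 2 * g k * (sig k)\<^sup>2 * (1 - (lam k)\<^sup>2) * y)) ^ (c k)
              * hyp0F1 ((lam k)\<^sup>2 / (1 - (lam k)\<^sup>2) / Sconst K lam * y * t)" for k t y
  have hm[measurable]: "(\<lambda>(t, y). h k t y) \<in> borel_measurable (borel \<Otimes>\<^sub>M borel)" for k
    unfolding h_def by measurable
  have h0: "0 \<le> h k t y" if "k < K" "0 \<le> t" "0 \<le> y" for k t y
  proof -
    note lf = lam_facts[OF lam[OF that(1)]]
    have "0 \<le> 2 * g k * (sig k)\<^sup>2 * (1 - (lam k)\<^sup>2) * y" using g[OF that(1)] lf that by simp
    then have A: "0 \<le> log 2 (1 + 2 * g k * (sig k)\<^sup>2 * (1 - (lam k)\<^sup>2) * y)" by (rule log2_nonneg)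
    have B: "0 \<le> (lam k)\<^sup>2 / (1 - (lam k)\<^sup>2) / Sconst K lam * y * t" using lf S1 that by simp
    show ?thesis unfolding h_def by (intro mult_nonneg_nonneg zero_le_power A hyp0F1_nonneg[OF B] exp_ge_zero)
  qed
  have Zh: "Zf K sig lam g c k t = (\<integral>\<^sup>+y. ennreal (h k t y) * indicator {0..} y \<partial>lborel)" for k t
    by (simp add: Zf_def h_def)
  have inner: "(LBINT y:{0..}. h k t y) = enn2real (Zf K sig lam g c k t)" if "k < K" "0 \<le> t" for k t
  proof -
    have "(LBINT y:{0..}. h k t y) = enn2real (\<integral>\<^sup>+y. ennreal (indicator {0..} y *\<^sub>R h k t y) \<partial>lborel)"
      unfolding set_lebesgue_integral_def
      by (rule integral_eq_nn_integral) (use that in \<open>auto simp: indicator_def intro!: h0\<close>)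
    also have "(\<integral>\<^sup>+y. ennreal (indicator {0..} y *\<^sub>R h k t y) \<partial>lborel) = Zf K sig lam g c k t"
      unfolding Zh by (intro nn_integral_cong) (auto simp: indicator_def)
    finally show ?thesis .
  qed
  define F where "F t = exp (- t) * (\<Prod>k<K. LBINT y:{0..}. h k t y)" for t
  have Fm[measurable]: "F \<in> borel_measurable borel"
    unfolding F_def set_lebesgue_integral_def by measurable
  have Fe: "F t = exp (- t) * enn2real (\<Prod>k<K. Zf K sig lam g c k t)" if "0 \<le> t" for t
    unfolding F_def enn2real_prod using inner that by simp
  have lhs: "(LBINT t:{0..}. exp (- t) *
          (\<Prod>k<K. LBINT y:{0..}. exp (- y)
              * (log 2 (1 + 2 * g k * (sig k)\<^sup>2 * (1 - (lam k)\<^sup>2) * y)) ^ (c k)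
              * hyp0F1 ((lam k)\<^sup>2 / (1 - (lam k)\<^sup>2) / Sconst K lam * y * t))) = (LBINT t:{0..}. F t)"
    by (simp add: F_def h_def)
  have "(LBINT t:{0..}. F t) = enn2real (\<integral>\<^sup>+t. ennreal (indicator {0..} t *\<^sub>R F t) \<partial>lborel)"
    unfolding set_lebesgue_integral_def
    by (rule integral_eq_nn_integral) (auto simp: indicator_def Fe)
  also have "(\<integral>\<^sup>+t. ennreal (indicator {0..} t *\<^sub>R F t) \<partial>lborel) = Jf K sig lam g c"
    unfolding Jf_def
  proof (intro nn_integral_cong)
    fix t :: real
    show "ennreal (indicator {0..} t *\<^sub>R F t) = ennreal (exp (- t)) * (\<Prod>k<K. Zf K sig lam g c k t) * indicator {0..} t"
    proof (cases "0 \<le> t")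
      case True
      have fin: "(\<Prod>k<K. Zf K sig lam g c k t) < \<infinity>"
      proof -
        have zf: "Zf K sig lam g c k t < \<infinity>" if "k < K" for k
          by (rule Zf_fin) (use sig lam g that True in auto)
        then show ?thesis unfolding infinity_ennreal_def less_top[symmetric] ennreal_prod_eq_top by fastforce
      qed
      have "ennreal (indicator {0..} t *\<^sub>R F t) = ennreal (exp (- t) * enn2real (\<Prod>k<K. Zf K sig lam g c k t))"
        using True by (simp add: Fe)
      also have "\<dots> = ennreal (exp (- t)) * (\<Prod>k<K. Zf K sig lam g c k t)"
        using fin by (simp add: ennreal_mult)
      finally show ?thesis using True by simp
    qed simp
  qed
  finally show ?thesis using lhs by simp
qed


lemma Hf_meas_raw[measurable (raw)]:
  assumes [measurable]: "f \<in> borel_measurable N" "h \<in> borel_measurable N"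
  shows "(\<lambda>x. Hf sig lam k (f x) (h x)) \<in> borel_measurable N"
  unfolding Hf_def by measurable

lemma jpdf_measurable:
  "jpdf K sig lam \<in> borel_measurable (PiM {..<K} (\<lambda>_. lborel))"
  unfolding jpdf_Hf[abs_def] set_lebesgue_integral_def by measurable

lemma sumrate_measurable:
  "sumrate K g \<in> borel_measurable (PiM {..<K} (\<lambda>_. lborel))"
  unfolding sumrate_def[abs_def] by measurable

lemma jpdf_nonneg:
  assumes lam: "\<And>k. k < K \<Longrightarrow> \<bar>lam k\<bar> < 1" and x: "\<And>k. k < K \<Longrightarrow> 0 \<le> x k"
  shows "0 \<le> jpdf K sig lam x"
proof -
  have P: "0 \<le> (\<Prod>k<K. 1 / ((sig k)\<^sup>2 * (1 - (lam k)\<^sup>2)))"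
  proof (rule prod_nonneg)
    fix k assume "k \<in> {..<K}"
    then have "0 < 1 - (lam k)\<^sup>2" using lam_facts[OF lam] by auto
    then show "0 \<le> 1 / ((sig k)\<^sup>2 * (1 - (lam k)\<^sup>2))" by simp
  qed
  have I: "0 \<le> (LBINT t:{0..}. exp (- Sconst K lam * t) * (\<Prod>k<K. Hf sig lam k (x k) t))"
    unfolding set_lebesgue_integral_def
    by (rule Bochner_Integration.integral_nonneg) (use x in \<open>auto simp: indicator_def intro!: mult_nonneg_nonneg prod_nonneg Hf_nonneg\<close>)
  show ?thesis unfolding jpdf_Hf using P I by simp
qed

lemma sumrate_nonneg:
  assumes g: "\<And>k. k < K \<Longrightarrow> 0 < g k"
  shows "0 \<le> sumrate K g x"
  unfolding sumrate_def using g by (intro sum_nonneg log2_nonneg) (simp add: less_imp_le)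

lemma moment_nn:
  assumes lam: "\<And>k. k < K \<Longrightarrow> \<bar>lam k\<bar> < 1" and g: "\<And>k. k < K \<Longrightarrow> 0 < g k"
  shows "moment K sig lam g i = enn2real (\<integral>\<^sup>+x. ennreal ((sumrate K g x) ^ i * jpdf K sig lam x)
            * (\<Prod>k<K. indicator {0..} (x k)) \<partial>PiM {..<K} (\<lambda>_. lborel))"
proof -
  let ?M = "PiM {..<K} (\<lambda>_. lborel :: real measure)"
  let ?D = "{x \<in> space ?M. \<forall>k<K. 0 \<le> x k}"
  have jm[measurable]: "jpdf K sig lam \<in> borel_measurable ?M" by (rule jpdf_measurable)
  have sm[measurable]: "sumrate K g \<in> borel_measurable ?M" by (rule sumrate_measurable)
  have ind: "indicator ?D x = (\<Prod>k<K. indicator {0..} (x k) :: real)" if "x \<in> space ?M" for x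
    using that by (auto simp: indicator_def prod_zero_iff)
  have "moment K sig lam g i = integral\<^sup>L ?M (\<lambda>x. (\<Prod>k<K. indicator {0..} (x k)) * ((sumrate K g x) ^ i * jpdf K sig lam x))"
    unfolding moment_def set_lebesgue_integral_def
    by (intro Bochner_Integration.integral_cong refl) (simp add: ind)
  also have "\<dots> = enn2real (\<integral>\<^sup>+x. ennreal ((\<Prod>k<K. indicator {0..} (x k)) * ((sumrate K g x) ^ i * jpdf K sig lam x)) \<partial>?M)"
  proof (rule integral_eq_nn_integral)
    show "(\<lambda>x. (\<Prod>k<K. indicator {0..} (x k)) * ((sumrate K g x) ^ i * jpdf K sig lam x)) \<in> borel_measurable ?M"
      by measurable
    show "AE x in ?M. 0 \<le> (\<Prod>k<K. indicator {0..} (x k)) * ((sumrate K g x) ^ i * jpdf K sig lam x)"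
    proof (intro AE_I2)
      fix x
      show "0 \<le> (\<Prod>k<K. indicator {0..} (x k) :: real) * ((sumrate K g x) ^ i * jpdf K sig lam x)"
      proof (cases "\<forall>k<K. 0 \<le> x k")
        case True
        then show ?thesis using sumrate_nonneg[OF g] jpdf_nonneg[OF lam] by (auto intro!: mult_nonneg_nonneg prod_nonneg)
      next
        case False
        then obtain k where k: "k < K" "x k < 0" by auto
        have z: "(\<Prod>k<K. indicator {0..} (x k) :: real) = 0"
          by (rule prod_zero) (use k in \<open>auto simp: indicator_def intro!: bexI[of _ k]\<close>)
        show ?thesis unfolding z by simp
      qed
    qed
  qed
  also have "(\<integral>\<^sup>+x. ennreal ((\<Prod>k<K. indicator {0..} (x k)) * ((sumrate K g x) ^ i * jpdf K sig lam x)) \<partial>?M)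
      = (\<integral>\<^sup>+x. ennreal ((sumrate K g x) ^ i * jpdf K sig lam x) * (\<Prod>k<K. indicator {0..} (x k)) \<partial>?M)"
  proof (intro nn_integral_cong)
    fix x :: "nat \<Rightarrow> real"
    have e: "(\<Prod>k<K. indicator {0..} (x k) :: ennreal) = ennreal (\<Prod>k<K. indicator {0..} (x k) :: real)"
      by (subst prod_ennreal[symmetric]) (auto simp: ennreal_indicator)
    show "ennreal ((\<Prod>k<K. indicator {0..} (x k)) * ((sumrate K g x) ^ i * jpdf K sig lam x))
        = ennreal ((sumrate K g x) ^ i * jpdf K sig lam x) * (\<Prod>k<K. indicator {0..} (x k))"
      unfolding e by (subst ennreal_mult') (auto simp: mult.commute prod_nonneg)
  qed
  finally show ?thesis .
qed


lemma per_c: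
  assumes sig: "\<And>k. k < K \<Longrightarrow> sig k > 0" and lam: "\<And>k. k < K \<Longrightarrow> \<bar>lam k\<bar> < 1"
    and g: "\<And>k. k < K \<Longrightarrow> g k > 0"
  shows "ennreal (\<Prod>k<K. 1 / ((sig k)\<^sup>2 * (1 - (lam k)\<^sup>2))) *
    (\<integral>\<^sup>+x. (\<integral>\<^sup>+t. ennreal (exp (- Sconst K lam * t) * (\<Prod>k<K. (log 2 (1 + g k * (x k)\<^sup>2)) ^ (c k) * Hf sig lam k (x k) t))
        * indicator {0..} t \<partial>lborel) * (\<Prod>k<K. indicator {0..} (x k)) \<partial>PiM {..<K} (\<lambda>_. lborel))
    = ennreal (1 / Sconst K lam) * Jf K sig lam g c"
proof -
  let ?M = "PiM {..<K} (\<lambda>_. lborel :: real measure)"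
  define S where "S = Sconst K lam"
  have S1: "1 \<le> S" using Sconst_ge1[OF lam] by (simp add: S_def)
  interpret P: product_sigma_finite "\<lambda>_::nat. lborel :: real measure" by standard
  interpret Ms: sigma_finite_measure ?M by (rule P.sigma_finite) simp
  interpret pair_sigma_finite ?M "lborel :: real measure" by unfold_locales
  define \<phi> where "\<phi> k y t = (log 2 (1 + g k * y\<^sup>2)) ^ (c k) * Hf sig lam k y t" for k y t
  have \<phi>m[measurable]: "(\<lambda>(y, t). \<phi> k y t) \<in> borel_measurable (borel \<Otimes>\<^sub>M borel)" for k
    unfolding \<phi>_def by measurable
  have \<phi>0: "0 \<le> \<phi> k y t" if "k < K" "0 \<le> y" "0 \<le> t" for k y t
    unfolding \<phi>_def using that g[OF that(1)] log2_nonneg[of "g k * y\<^sup>2"]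
    by (intro mult_nonneg_nonneg zero_le_power Hf_nonneg) auto
  define Ik where "Ik k t = (\<integral>\<^sup>+y. ennreal (\<phi> k y t) * indicator {0..} y \<partial>lborel)" for k t
  have Ikm[measurable]: "(\<lambda>t. Ik k t) \<in> borel_measurable borel" for k
    unfolding Ik_def by measurable
  define Pk where "Pk k = 1 / ((sig k)\<^sup>2 * (1 - (lam k)\<^sup>2))" for k
  have Pk0: "0 \<le> Pk k" if "k < K" for k
    using lam_facts(2)[OF lam[OF that]] by (simp add: Pk_def)
  define A where "A x t = ennreal (exp (- S * t) * (\<Prod>k<K. \<phi> k (x k) t)) * indicator {0..} t" for x :: "nat \<Rightarrow> real" and t
  have Am[measurable]: "(\<lambda>(x, t). A x t) \<in> borel_measurable (?M \<Otimes>\<^sub>M lborel)"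
    unfolding A_def \<phi>_def by measurable
  have a: "(\<integral>\<^sup>+x. (\<integral>\<^sup>+t. A x t \<partial>lborel) * (\<Prod>k<K. indicator {0..} (x k)) \<partial>?M)
      = (\<integral>\<^sup>+t. indicator {0..} t * ennreal (exp (- S * t)) * (\<Prod>k<K. Ik k t) \<partial>lborel)"
  proof -
    have "(\<integral>\<^sup>+x. (\<integral>\<^sup>+t. A x t \<partial>lborel) * (\<Prod>k<K. indicator {0..} (x k)) \<partial>?M)
        = (\<integral>\<^sup>+x. (\<integral>\<^sup>+t. A x t * (\<Prod>k<K. indicator {0..} (x k)) \<partial>lborel) \<partial>?M)"
      by (intro nn_integral_cong nn_integral_multc[symmetric]) measurable
    also have "\<dots> = (\<integral>\<^sup>+t. (\<integral>\<^sup>+x. A x t * (\<Prod>k<K. indicator {0..} (x k)) \<partial>?M) \<partial>lborel)"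
      by (rule Fubini'[symmetric]) measurable
    also have "\<dots> = (\<integral>\<^sup>+t. indicator {0..} t * ennreal (exp (- S * t)) * (\<Prod>k<K. Ik k t) \<partial>lborel)"
    proof (intro nn_integral_cong)
      fix t :: real
      have pw: "A x t * (\<Prod>k<K. indicator {0..} (x k))
          = (indicator {0..} t * ennreal (exp (- S * t))) * (\<Prod>k<K. ennreal (\<phi> k (x k) t) * indicator {0..} (x k))"
        for x :: "nat \<Rightarrow> real"
      proof (cases "0 \<le> t \<and> (\<forall>k<K. 0 \<le> x k)")
        case True
        have "ennreal (exp (- S * t) * (\<Prod>k<K. \<phi> k (x k) t)) = ennreal (exp (- S * t)) * (\<Prod>k<K. ennreal (\<phi> k (x k) t))"
        proof -
          have nn: "\<And>k. k \<in> {..<K} \<Longrightarrow> 0 \<le> \<phi> k (x k) t" using True \<phi>0 by auto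
          have pe: "(\<Prod>k<K. ennreal (\<phi> k (x k) t)) = ennreal (\<Prod>k<K. \<phi> k (x k) t)"
            by (rule prod_ennreal) (rule nn)
          have p0: "0 \<le> (\<Prod>k<K. \<phi> k (x k) t)" by (rule prod_nonneg) (rule nn)
          show ?thesis by (simp only: ennreal_mult[OF exp_ge_zero p0] pe)
        qed
        then show ?thesis unfolding A_def by (simp add: prod.distrib mult_ac)
      next
        case False
        then show ?thesis
        proof (cases "0 \<le> t")
          case True
          with False obtain k where k: "k < K" "x k < 0" by auto
          have z: "(\<Prod>k<K. indicator {0..} (x k) :: ennreal) = 0"
            by (rule prod_zero) (use k in \<open>auto simp: indicator_def intro!: bexI[of _ k]\<close>)
          have z2: "(\<Prod>k<K. ennreal (\<phi> k (x k) t) * indicator {0..} (x k)) = 0"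
            by (rule prod_zero) (use k in \<open>auto simp: indicator_def intro!: bexI[of _ k]\<close>)
          show ?thesis unfolding z z2 by simp
        qed (simp add: A_def)
      qed
      have "(\<integral>\<^sup>+x. A x t * (\<Prod>k<K. indicator {0..} (x k)) \<partial>?M)
          = (\<integral>\<^sup>+x. (indicator {0..} t * ennreal (exp (- S * t))) * (\<Prod>k<K. ennreal (\<phi> k (x k) t) * indicator {0..} (x k)) \<partial>?M)"
        by (simp only: pw)
      also have "\<dots> = (indicator {0..} t * ennreal (exp (- S * t))) * (\<integral>\<^sup>+x. (\<Prod>k<K. ennreal (\<phi> k (x k) t) * indicator {0..} (x k)) \<partial>?M)"
        by (rule nn_integral_cmult) measurable
      also have "(\<integral>\<^sup>+x. (\<Prod>k<K. ennreal (\<phi> k (x k) t) * indicator {0..} (x k)) \<partial>?M) = (\<Prod>k<K. Ik k t)"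
        unfolding Ik_def by (rule P.product_nn_integral_prod) auto
      finally show "(\<integral>\<^sup>+x. A x t * (\<Prod>k<K. indicator {0..} (x k)) \<partial>?M) = indicator {0..} t * ennreal (exp (- S * t)) * (\<Prod>k<K. Ik k t)" .
    qed
    finally show ?thesis .
  qed
  define Yk where "Yk k t = (\<integral>\<^sup>+y. ennreal (exp (- y) * (log 2 (1 + 2 * g k * (sig k)\<^sup>2 * (1 - (lam k)\<^sup>2) * y)) ^ (c k)
          * hyp0F1 ((lam k)\<^sup>2 / (1 - (lam k)\<^sup>2) * y * t)) * indicator {0..} y \<partial>lborel)" for k t
  have Ykm[measurable]: "(\<lambda>t. Yk k t) \<in> borel_measurable borel" for k
    unfolding Yk_def by measurable
  have PY: "ennreal (Pk k) * Ik k t = Yk k t" if "k < K" "0 \<le> t" for k t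
    unfolding Pk_def Ik_def Yk_def \<phi>_def
    by (rule sub1[where sg="sig k" and sig=sig and lam=lam and k=k and gg="g k" and t=t and c="c k"])
      (use sig lam g that in \<open>auto intro: less_imp_le\<close>)
  have b: "ennreal (\<Prod>k<K. Pk k) * (\<integral>\<^sup>+t. indicator {0..} t * ennreal (exp (- S * t)) * (\<Prod>k<K. Ik k t) \<partial>lborel)
      = (\<integral>\<^sup>+t. indicator {0..} t * ennreal (exp (- S * t)) * (\<Prod>k<K. Yk k t) \<partial>lborel)"
  proof -
    have "ennreal (\<Prod>k<K. Pk k) * (\<integral>\<^sup>+t. indicator {0..} t * ennreal (exp (- S * t)) * (\<Prod>k<K. Ik k t) \<partial>lborel)
      = (\<integral>\<^sup>+t. ennreal (\<Prod>k<K. Pk k) * (indicator {0..} t * ennreal (exp (- S * t)) * (\<Prod>k<K. Ik k t)) \<partial>lborel)"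
      by (rule nn_integral_cmult[symmetric]) measurable
    also have "\<dots> = (\<integral>\<^sup>+t. indicator {0..} t * ennreal (exp (- S * t)) * (\<Prod>k<K. Yk k t) \<partial>lborel)"
    proof (intro nn_integral_cong)
      fix t :: real
      show "ennreal (\<Prod>k<K. Pk k) * (indicator {0..} t * ennreal (exp (- S * t)) * (\<Prod>k<K. Ik k t))
          = indicator {0..} t * ennreal (exp (- S * t)) * (\<Prod>k<K. Yk k t)"
      proof (cases "0 \<le> t")
        case True
        have "ennreal (\<Prod>k<K. Pk k) * (\<Prod>k<K. Ik k t) = (\<Prod>k<K. ennreal (Pk k)) * (\<Prod>k<K. Ik k t)"
          using Pk0 by (subst prod_ennreal) auto
        also have "\<dots> = (\<Prod>k<K. ennreal (Pk k) * Ik k t)" by (simp add: prod.distrib)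
        also have "\<dots> = (\<Prod>k<K. Yk k t)" using PY True by (intro prod.cong) auto
        finally have e: "ennreal (\<Prod>k<K. Pk k) * (\<Prod>k<K. Ik k t) = (\<Prod>k<K. Yk k t)" .
        have "ennreal (\<Prod>k<K. Pk k) * (indicator {0..} t * ennreal (exp (- S * t)) * (\<Prod>k<K. Ik k t))
          = indicator {0..} t * ennreal (exp (- S * t)) * (ennreal (\<Prod>k<K. Pk k) * (\<Prod>k<K. Ik k t))"
          by (simp only: mult_ac)
        then show ?thesis by (simp only: e)
      qed simp
    qed
    finally show ?thesis .
  qed
  have S0: "0 < S" using S1 by simp
  have c: "(\<integral>\<^sup>+t. indicator {0..} t * ennreal (exp (- S * t)) * (\<Prod>k<K. Yk k t) \<partial>lborel)
      = ennreal (1 / S) * Jf K sig lam g c"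
  proof -
    have "(\<integral>\<^sup>+t. indicator {0..} t * ennreal (exp (- S * t)) * (\<Prod>k<K. Yk k t) \<partial>lborel)
      = ennreal \<bar>1 / S\<bar> * (\<integral>\<^sup>+s. indicator {0..} (0 + 1 / S * s) * ennreal (exp (- S * (0 + 1 / S * s))) * (\<Prod>k<K. Yk k (0 + 1 / S * s)) \<partial>lborel)"
      by (rule nn_integral_real_affine) (use S0 in auto)
    also have "(\<integral>\<^sup>+s. indicator {0..} (0 + 1 / S * s) * ennreal (exp (- S * (0 + 1 / S * s))) * (\<Prod>k<K. Yk k (0 + 1 / S * s)) \<partial>lborel)
        = Jf K sig lam g c"
      unfolding Jf_def
    proof (intro nn_integral_cong)
      fix s :: real
      have i: "indicator {0..} (0 + 1 / S * s) = (indicator {0..} s :: ennreal)"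
        using S0 by (auto simp: indicator_def zero_le_divide_iff)
      have e: "exp (- S * (0 + 1 / S * s)) = exp (- s)" using S0 by simp
      have y: "Yk k (0 + 1 / S * s) = Zf K sig lam g c k s" for k
        unfolding Yk_def Zf_def
      proof (intro nn_integral_cong)
        fix y :: real
        have "(lam k)\<^sup>2 / (1 - (lam k)\<^sup>2) * y * (0 + 1 / S * s) = (lam k)\<^sup>2 / (1 - (lam k)\<^sup>2) / Sconst K lam * y * s"
          by (simp add: S_def)
        then show "ennreal (exp (- y) * (log 2 (1 + 2 * g k * (sig k)\<^sup>2 * (1 - (lam k)\<^sup>2) * y)) ^ (c k)
          * hyp0F1 ((lam k)\<^sup>2 / (1 - (lam k)\<^sup>2) * y * (0 + 1 / S * s))) * indicator {0..} y
          = ennreal (exp (- y) * (log 2 (1 + 2 * g k * (sig k)\<^sup>2 * (1 - (lam k)\<^sup>2) * y)) ^ (c k)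
          * hyp0F1 ((lam k)\<^sup>2 / (1 - (lam k)\<^sup>2) / Sconst K lam * y * s)) * indicator {0..} y"
          by (simp only:)
      qed
      show "indicator {0..} (0 + 1 / S * s) * ennreal (exp (- S * (0 + 1 / S * s))) * (\<Prod>k<K. Yk k (0 + 1 / S * s))
          = ennreal (exp (- s)) * (\<Prod>k<K. Zf K sig lam g c k s) * indicator {0..} s"
        unfolding i e y by (simp only: mult_ac)
    qed
    finally show ?thesis using S0 by simp
  qed
  have "ennreal (\<Prod>k<K. 1 / ((sig k)\<^sup>2 * (1 - (lam k)\<^sup>2))) *
    (\<integral>\<^sup>+x. (\<integral>\<^sup>+t. ennreal (exp (- Sconst K lam * t) * (\<Prod>k<K. (log 2 (1 + g k * (x k)\<^sup>2)) ^ (c k) * Hf sig lam k (x k) t))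
        * indicator {0..} t \<partial>lborel) * (\<Prod>k<K. indicator {0..} (x k)) \<partial>?M)
    = ennreal (\<Prod>k<K. Pk k) * (\<integral>\<^sup>+x. (\<integral>\<^sup>+t. A x t \<partial>lborel) * (\<Prod>k<K. indicator {0..} (x k)) \<partial>?M)"
    by (simp add: Pk_def A_def \<phi>_def S_def)
  also have "\<dots> = ennreal (1 / S) * Jf K sig lam g c"
    unfolding a b c ..
  finally show ?thesis by (simp only: S_def)
qed


theorem mainTheorem3:
  fixes K :: nat and sig lam g :: "nat \<Rightarrow> real" and i :: nat
  assumes "K \<ge> 1"
    and "\<And>k. k < K \<Longrightarrow> sig k > 0"
    and "\<And>k. k < K \<Longrightarrow> \<bar>lam k\<bar> < 1"
    and "\<And>k. k < K \<Longrightarrow> g k > 0"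
  shows "moment K sig lam g i =
    fact i / Sconst K lam *
    (\<Sum>c\<in>{c \<in> {..<K} \<rightarrow>\<^sub>E {..i}. (\<Sum>k<K. c k) = i}.
       (1 / (\<Prod>k<K. fact (c k))) *
       (LBINT t:{0..}. exp (- t) *
          (\<Prod>k<K. LBINT y:{0..}. exp (- y)
              * (log 2 (1 + 2 * g k * (sig k)\<^sup>2 * (1 - (lam k)\<^sup>2) * y)) ^ (c k)
              * hyp0F1 ((lam k)\<^sup>2 / (1 - (lam k)\<^sup>2) / Sconst K lam * y * t))))"
proof -
  note K1 = assms(1) and sig = assms(2) and lam = assms(3) and g = assms(4)
  let ?M = "PiM {..<K} (\<lambda>_. lborel :: real measure)"
  let ?C = "{c \<in> {..<K} \<rightarrow>\<^sub>E {..i}. (\<Sum>k<K. c k) = i}"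
  define S where "S = Sconst K lam"
  have S1: "1 \<le> S" using Sconst_ge1[OF lam] by (simp add: S_def)
  define P where "P = (\<Prod>k<K. 1 / ((sig k)\<^sup>2 * (1 - (lam k)\<^sup>2)))"
  have P0: "0 \<le> P" unfolding P_def
  proof (intro prod_nonneg)
    fix k assume "k \<in> {..<K}"
    then have "0 < 1 - (lam k)\<^sup>2" using lam_facts(2)[OF lam] by auto
    then show "0 \<le> 1 / ((sig k)\<^sup>2 * (1 - (lam k)\<^sup>2))" by simp
  qed
  define coef :: "(nat \<Rightarrow> nat) \<Rightarrow> real" where "coef c = fact i / (\<Prod>k<K. fact (c k))" for c
  have coef0: "0 \<le> coef c" for c unfolding coef_def by (intro divide_nonneg_nonneg prod_nonneg) auto
  define Q where "Q c x = (\<integral>\<^sup>+t. ennreal (exp (- Sconst K lam * t) * (\<Prod>k<K. (log 2 (1 + g k * (x k)\<^sup>2)) ^ (c k) * Hf sig lam k (x k) t))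
        * indicator {0..} t \<partial>lborel)" for c and x :: "nat \<Rightarrow> real"
  have Qm[measurable]: "(\<lambda>x. Q c x) \<in> borel_measurable ?M" for c
    unfolding Q_def by measurable
  have pw: "ennreal ((sumrate K g x) ^ i * jpdf K sig lam x) * (\<Prod>k<K. indicator {0..} (x k))
      = (\<Sum>c\<in>?C. ennreal (coef c) * (ennreal P * (Q c x * (\<Prod>k<K. indicator {0..} (x k)))))" for x :: "nat \<Rightarrow> real"
  proof (cases "\<forall>k<K. 0 \<le> x k")
    case True
    have i1: "(\<Prod>k<K. indicator {0..} (x k) :: ennreal) = 1"
      using True by (intro prod.neutral) auto
    define a where "a k = log 2 (1 + g k * (x k)\<^sup>2)" for k
    have a0: "0 \<le> a k" if "k < K" for k
      unfolding a_def using g[OF that] by (intro log2_nonneg) simp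
    have sr: "sumrate K g x = (\<Sum>k<K. a k)" by (simp add: sumrate_def a_def)
    have multi: "(sumrate K g x) ^ i = (\<Sum>c\<in>?C. coef c * (\<Prod>k<K. a k ^ c k))"
      unfolding sr coef_def by (rule multinomial_real) simp
    have t0: "0 \<le> coef c * (\<Prod>k<K. a k ^ c k)" for c
      using coef0 a0 by (intro mult_nonneg_nonneg prod_nonneg zero_le_power) auto
    have jn: "ennreal (jpdf K sig lam x) = ennreal P * (\<integral>\<^sup>+t. ennreal (exp (- Sconst K lam * t) * (\<Prod>k<K. Hf sig lam k (x k) t)) * indicator {0..} t \<partial>lborel)"
      unfolding P_def by (rule jpdf_nn[OF K1 lam]) (use True in auto)
    have trm: "ennreal (coef c * (\<Prod>k<K. a k ^ c k)) * (ennreal P * (\<integral>\<^sup>+t. ennreal (exp (- Sconst K lam * t) * (\<Prod>k<K. Hf sig lam k (x k) t)) * indicator {0..} t \<partial>lborel))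
        = ennreal (coef c) * (ennreal P * Q c x)" for c
    proof -
      have pa: "0 \<le> (\<Prod>k<K. a k ^ c k)" using a0 by (intro prod_nonneg zero_le_power) auto
      have "ennreal (\<Prod>k<K. a k ^ c k) * (\<integral>\<^sup>+t. ennreal (exp (- Sconst K lam * t) * (\<Prod>k<K. Hf sig lam k (x k) t)) * indicator {0..} t \<partial>lborel)
          = (\<integral>\<^sup>+t. ennreal (\<Prod>k<K. a k ^ c k) * (ennreal (exp (- Sconst K lam * t) * (\<Prod>k<K. Hf sig lam k (x k) t)) * indicator {0..} t) \<partial>lborel)"
        by (rule nn_integral_cmult[symmetric]) measurable
      also have "\<dots> = Q c x"
        unfolding Q_def
      proof (intro nn_integral_cong)
        fix t :: real
        show "ennreal (\<Prod>k<K. a k ^ c k) * (ennreal (exp (- Sconst K lam * t) * (\<Prod>k<K. Hf sig lam k (x k) t)) * indicator {0..} t)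
            = ennreal (exp (- Sconst K lam * t) * (\<Prod>k<K. (log 2 (1 + g k * (x k)\<^sup>2)) ^ (c k) * Hf sig lam k (x k) t)) * indicator {0..} t"
        proof (cases "0 \<le> t")
          case True
          have h0: "0 \<le> exp (- Sconst K lam * t) * (\<Prod>k<K. Hf sig lam k (x k) t)"
            using True \<open>\<forall>k<K. 0 \<le> x k\<close> by (intro mult_nonneg_nonneg prod_nonneg Hf_nonneg) auto
          have "ennreal (\<Prod>k<K. a k ^ c k) * ennreal (exp (- Sconst K lam * t) * (\<Prod>k<K. Hf sig lam k (x k) t))
              = ennreal ((\<Prod>k<K. a k ^ c k) * (exp (- Sconst K lam * t) * (\<Prod>k<K. Hf sig lam k (x k) t)))"
            by (rule ennreal_mult[OF pa h0, symmetric])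
          also have "(\<Prod>k<K. a k ^ c k) * (exp (- Sconst K lam * t) * (\<Prod>k<K. Hf sig lam k (x k) t))
              = exp (- Sconst K lam * t) * (\<Prod>k<K. (log 2 (1 + g k * (x k)\<^sup>2)) ^ (c k) * Hf sig lam k (x k) t)"
            by (simp add: a_def prod.distrib mult_ac)
          finally show ?thesis by (simp add: mult.assoc[symmetric])
        qed simp
      qed
      finally have e: "ennreal (\<Prod>k<K. a k ^ c k) * (\<integral>\<^sup>+t. ennreal (exp (- Sconst K lam * t) * (\<Prod>k<K. Hf sig lam k (x k) t)) * indicator {0..} t \<partial>lborel) = Q c x" .
      have "ennreal (coef c * (\<Prod>k<K. a k ^ c k)) = ennreal (coef c) * ennreal (\<Prod>k<K. a k ^ c k)"
        by (rule ennreal_mult[OF coef0 pa])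
      then show ?thesis using e by (simp add: mult_ac)
    qed
    have s0: "0 \<le> (sumrate K g x) ^ i" using sumrate_nonneg[OF g] by simp
    have "ennreal ((sumrate K g x) ^ i * jpdf K sig lam x) = ennreal ((sumrate K g x) ^ i) * ennreal (jpdf K sig lam x)"
      by (rule ennreal_mult'[OF s0])
    also have "ennreal ((sumrate K g x) ^ i) = (\<Sum>c\<in>?C. ennreal (coef c * (\<Prod>k<K. a k ^ c k)))"
      unfolding multi using t0 by (subst sum_ennreal) auto
    finally have "ennreal ((sumrate K g x) ^ i * jpdf K sig lam x)
        = (\<Sum>c\<in>?C. ennreal (coef c * (\<Prod>k<K. a k ^ c k)) * ennreal (jpdf K sig lam x))"
      by (simp add: sum_distrib_right)
    also have "\<dots> = (\<Sum>c\<in>?C. ennreal (coef c) * (ennreal P * Q c x))"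
      unfolding jn by (intro sum.cong refl trm)
    finally show ?thesis unfolding i1 by simp
  next
    case False
    then obtain k where k: "k < K" "x k < 0" by auto
    have z: "(\<Prod>k<K. indicator {0..} (x k) :: ennreal) = 0"
      by (rule prod_zero) (use k in \<open>auto simp: indicator_def intro!: bexI[of _ k]\<close>)
    show ?thesis unfolding z by simp
  qed
  have fin: "ennreal (coef c) * (ennreal (1 / S) * Jf K sig lam g c) < \<infinity>" for c
  proof -
    have "Jf K sig lam g c < \<infinity>" by (rule Jf_fin) (use sig lam g in auto)
    then show ?thesis by (simp add: ennreal_mult_less_top)
  qed
  have "moment K sig lam g i = enn2real (\<integral>\<^sup>+x. ennreal ((sumrate K g x) ^ i * jpdf K sig lam x)
            * (\<Prod>k<K. indicator {0..} (x k)) \<partial>?M)"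
    by (rule moment_nn[OF lam g])
  also have "(\<integral>\<^sup>+x. ennreal ((sumrate K g x) ^ i * jpdf K sig lam x) * (\<Prod>k<K. indicator {0..} (x k)) \<partial>?M)
      = (\<integral>\<^sup>+x. (\<Sum>c\<in>?C. ennreal (coef c) * (ennreal P * (Q c x * (\<Prod>k<K. indicator {0..} (x k))))) \<partial>?M)"
    by (simp only: pw)
  also have "\<dots> = (\<Sum>c\<in>?C. (\<integral>\<^sup>+x. ennreal (coef c) * (ennreal P * (Q c x * (\<Prod>k<K. indicator {0..} (x k)))) \<partial>?M))"
    by (rule nn_integral_sum) measurable
  also have "\<dots> = (\<Sum>c\<in>?C. ennreal (coef c) * (ennreal P * (\<integral>\<^sup>+x. Q c x * (\<Prod>k<K. indicator {0..} (x k)) \<partial>?M)))"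
    by (intro sum.cong refl) (simp add: nn_integral_cmult)
  also have "\<dots> = (\<Sum>c\<in>?C. ennreal (coef c) * (ennreal (1 / S) * Jf K sig lam g c))"
    unfolding P_def Q_def S_def by (intro sum.cong refl arg_cong2[where f="(*)"] per_c[OF sig lam g])
  finally have "moment K sig lam g i = enn2real (\<Sum>c\<in>?C. ennreal (coef c) * (ennreal (1 / S) * Jf K sig lam g c))" .
  also have "\<dots> = (\<Sum>c\<in>?C. coef c * (1 / S) * enn2real (Jf K sig lam g c))"
    using fin S1 coef0 by (subst enn2real_sum) (auto simp: enn2real_mult)
  also have "\<dots> = fact i / S * (\<Sum>c\<in>?C. (1 / (\<Prod>k<K. fact (c k))) * enn2real (Jf K sig lam g c))"
    unfolding sum_distrib_left by (intro sum.cong refl) (simp add: coef_def)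
  also have "\<dots> = fact i / Sconst K lam *
    (\<Sum>c\<in>?C. (1 / (\<Prod>k<K. fact (c k))) *
       (LBINT t:{0..}. exp (- t) *
          (\<Prod>k<K. LBINT y:{0..}. exp (- y)
              * (log 2 (1 + 2 * g k * (sig k)\<^sup>2 * (1 - (lam k)\<^sup>2) * y)) ^ (c k)
              * hyp0F1 ((lam k)\<^sup>2 / (1 - (lam k)\<^sup>2) / Sconst K lam * y * t))))"
  proof -
    have r: "enn2real (Jf K sig lam g c) = (LBINT t:{0..}. exp (- t) *
          (\<Prod>k<K. LBINT y:{0..}. exp (- y)
              * (log 2 (1 + 2 * g k * (sig k)\<^sup>2 * (1 - (lam k)\<^sup>2) * y)) ^ (c k)
              * hyp0F1 ((lam k)\<^sup>2 / (1 - (lam k)\<^sup>2) / Sconst K lam * y * t)))" for c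
      by (rule rhs_term[symmetric]) (use sig lam g in auto)
    show ?thesis by (simp only: S_def r)
  qed
  finally show ?thesis .
qed


end
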